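(* Let $N\in\mathbb N$, $F=\mathbb Z/N\mathbb Z$, $k\in\mathbb N_0$, and let $\sigma\in G_F$ be a $2k$-block configuration. Then \[4k\le\|\Delta A_F(\sigma)\|_1\le 4k^2,\] and $\|\Delta A_F(\sigma)\|_1$ is a multiple of $4$.
   Context: $G_F=\{-1,1\}^F$, $A_F(\sigma)_f=\sum_{j\in F}\sigma_j\sigma_{j+f}$, $(\Delta h)_f=\frac14(h_{f-1}-2h_f+h_{f+1})$, and $\|h\|_1=\sum_{f\in F}|h_f|$. A configuration $\sigma$ is a $2k$-block configuration if the number of $f\in F$ with $\sigma_f\neq\sigma_{f+1}$ equals $2k$ (equivalently, $\sigma$ is a cyclic translate of $(1)^{m_1}(-1)^{m_2}\cdots(1)^{m_{2k-1}}(-1)^{m_{2k}}$ with all $m_\ell\in\mathbb N$, or $\sigma=\pm\mathbf 1$ when $k=0$). *)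

theory Defs
  imports Main Complex_Main
begin

text \<open>F = Z/NZ represented by {0..<N}; configurations sigma : nat => int restricted to F.\<close>

definition config :: "nat \<Rightarrow> (nat \<Rightarrow> int) \<Rightarrow> bool" where
  "config N \<sigma> \<longleftrightarrow> (\<forall>f<N. \<sigma> f = 1 \<or> \<sigma> f = -1)"

definition autocorr :: "nat \<Rightarrow> (nat \<Rightarrow> int) \<Rightarrow> nat \<Rightarrow> int" where
  "autocorr N \<sigma> f = (\<Sum>j<N. \<sigma> j * \<sigma> ((j + f) mod N))"

definition dlap :: "nat \<Rightarrow> (nat \<Rightarrow> int) \<Rightarrow> nat \<Rightarrow> real" where
  "dlap N h f = (real_of_int (h ((f + N - 1) mod N)) - 2 * real_of_int (h f)
                 + real_of_int (h ((f + 1) mod N))) / 4"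

definition norm1 :: "nat \<Rightarrow> (nat \<Rightarrow> real) \<Rightarrow> real" where
  "norm1 N h = (\<Sum>f<N. \<bar>h f\<bar>)"

definition num_changes :: "nat \<Rightarrow> (nat \<Rightarrow> int) \<Rightarrow> nat" where
  "num_changes N \<sigma> = card {f. f < N \<and> \<sigma> f \<noteq> \<sigma> ((f + 1) mod N)}"

end

theory Submission imports Defs begin
lemma sum_shift_mod:
  fixes g :: "nat \<Rightarrow> 'a::comm_monoid_add"
  assumes "0 < n"
  shows "(\<Sum>f<n. g ((j + f) mod n)) = (\<Sum>f<n. g f)"
proof (rule sum.reindex_bij_witness[where i="\<lambda>i. (i + (n - j mod n)) mod n" and j="\<lambda>f. (j+f) mod n"])
  have k1: "j = n * (j div n) + j mod n" by simp
  have k2: "j mod n < n" using assms by simp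
  have key: "j + (n - j mod n) = n * (j div n + 1)"
    using k1 k2 by (simp add: algebra_simps, linarith)
  fix a assume a: "a \<in> {..<n}"
  have "((j + a) mod n + (n - j mod n)) mod n = (a + (j + (n - j mod n))) mod n"
    unfolding mod_add_left_eq by (simp add: ac_simps)
  also have "\<dots> = (a + n * (j div n + 1)) mod n" by (simp only: key)
  also have "\<dots> = a" using a by (metis lessThan_iff mod_less mod_mult_self2)
  finally show "((j + a) mod n + (n - j mod n)) mod n = a" .
  have "(j + (a + (n - j mod n)) mod n) mod n = (a + (j + (n - j mod n))) mod n"
    unfolding mod_add_right_eq by (simp add: ac_simps)
  also have "\<dots> = (a + n * (j div n + 1)) mod n" by (simp only: key)
  also have "\<dots> = a" using a by (metis lessThan_iff mod_less mod_mult_self2)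
  finally show "(j + (a + (n - j mod n)) mod n) mod n = a" .
qed (use assms in auto)


lemma even_sym_sum:
  fixes g :: "nat \<Rightarrow> int"
  assumes sym: "\<And>f. 0 < f \<Longrightarrow> f < N \<Longrightarrow> g (N - f) = g f"
    and mid: "\<And>h. N = 2 * h \<Longrightarrow> even (g h)"
  shows "even (\<Sum>f\<in>{1..<N}. g f)"
proof -
  define A where "A = {f. 0 < f \<and> 2 * f < N}"
  define B where "B = {f. 0 < f \<and> 2 * f = N}"
  define C where "C = {f. N < 2 * f \<and> f < N}"
  have fin: "finite A" "finite B" "finite C"
    unfolding A_def B_def C_def by (auto intro: finite_subset[of _ "{..<N}"])
  have U: "{1..<N} = A \<union> (B \<union> C)" unfolding A_def B_def C_def by auto
  have D1: "A \<inter> (B \<union> C) = {}" "B \<inter> C = {}" unfolding A_def B_def C_def by auto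
  have split: "(\<Sum>f\<in>{1..<N}. g f) = sum g A + (sum g B + sum g C)"
    unfolding U using fin D1 by (simp add: sum.union_disjoint)
  have CA: "sum g C = sum g A"
    by (rule sum.reindex_bij_witness[where i="\<lambda>f. N - f" and j="\<lambda>f. N - f"])
       (auto simp: A_def C_def sym)
  have EB: "even (sum g B)"
  proof (cases "\<exists>h. 0 < h \<and> N = 2 * h")
    case True
    then obtain h where h: "0 < h" "N = 2 * h" by blast
    then have "B = {h}" unfolding B_def by auto
    then show ?thesis using mid[OF h(2)] by simp
  next
    case False
    have "B = {}"
    proof (rule equals0I)
      fix f assume "f \<in> B"
      then have "0 < f" "N = 2 * f" by (auto simp: B_def)
      with False show False by blast
    qed
    then show ?thesis by simp
  qed
  show ?thesis using split CA EB by simp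
qed

definition uu :: "nat \<Rightarrow> (nat \<Rightarrow> int) \<Rightarrow> nat \<Rightarrow> int" where
  "uu N \<sigma> j = (\<sigma> ((j+1) mod N) - \<sigma> (j mod N)) div 2"

definition TT :: "nat \<Rightarrow> (nat \<Rightarrow> int) \<Rightarrow> nat \<Rightarrow> int" where
  "TT N \<sigma> f = (\<Sum>j<N. uu N \<sigma> j * uu N \<sigma> ((j+f) mod N))"

context
  fixes N :: nat and \<sigma> :: "nat \<Rightarrow> int"
  assumes N1: "N \<ge> 1" and cf: "config N \<sigma>"
begin

lemma Npos: "0 < N" using N1 by simp

lemma sig: "\<sigma> (j mod N) = 1 \<or> \<sigma> (j mod N) = -1"
  using cf Npos unfolding config_def by simp

lemma e_eq: "\<sigma> ((j+1) mod N) - \<sigma> (j mod N) = 2 * uu N \<sigma> j"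
  unfolding uu_def using sig[of j] sig[of "j+1"] by auto

lemma u_vals: "uu N \<sigma> j \<in> {-1,0,1}"
  unfolding uu_def using sig[of j] sig[of "j+1"] by auto

lemma u_abs: "\<bar>uu N \<sigma> j\<bar> = (if \<sigma> ((j+1) mod N) \<noteq> \<sigma> (j mod N) then 1 else 0)"
  unfolding uu_def using sig[of j] sig[of "j+1"] by auto

lemma u_sq: "uu N \<sigma> j * uu N \<sigma> j = \<bar>uu N \<sigma> j\<bar>"
  using u_vals[of j] by auto

lemma u_mod: "uu N \<sigma> (j mod N) = uu N \<sigma> j"
  unfolding uu_def by (simp add: mod_Suc_eq)

lemma sum_u: "(\<Sum>j<N. uu N \<sigma> j) = 0"
proof -
  have "2 * (\<Sum>j<N. uu N \<sigma> j) = (\<Sum>j<N. \<sigma> ((j+1) mod N) - \<sigma> (j mod N))"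
    unfolding sum_distrib_left by (rule sum.cong[OF refl]) (rule e_eq[symmetric])
  also have "\<dots> = (\<Sum>j<N. \<sigma> ((1+j) mod N)) - (\<Sum>j<N. \<sigma> j)"
    by (simp add: sum_subtractf add.commute)
  also have "\<dots> = 0" using sum_shift_mod[OF Npos, of \<sigma> 1] by simp
  finally show ?thesis by simp
qed

lemma sum_abs_u: "(\<Sum>j<N. \<bar>uu N \<sigma> j\<bar>) = int (num_changes N \<sigma>)"
proof -
  have "(\<Sum>j<N. \<bar>uu N \<sigma> j\<bar>) = (\<Sum>j<N. (if \<sigma> j \<noteq> \<sigma> ((j+1) mod N) then 1 else 0))"
    by (rule sum.cong) (auto simp: u_abs)
  also have "\<dots> = int (card {f. f < N \<and> \<sigma> f \<noteq> \<sigma> ((f + 1) mod N)})"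
    by (simp add: sum.If_cases Int_def lessThan_def conj_commute)
  finally show ?thesis unfolding num_changes_def .
qed

lemma S1: "(\<Sum>j<N. \<sigma> ((j+1) mod N) * \<sigma> ((j+f+1) mod N)) = autocorr N \<sigma> f"
proof -
  have "autocorr N \<sigma> f = (\<Sum>j<N. (\<lambda>i. \<sigma> i * \<sigma> ((i+f) mod N)) ((1+j) mod N))"
    unfolding autocorr_def by (rule sum_shift_mod[OF Npos, symmetric])
  also have "\<dots> = (\<Sum>j<N. \<sigma> ((j+1) mod N) * \<sigma> ((j+f+1) mod N))"
    by (rule sum.cong[OF refl]) (simp add: mod_add_left_eq mod_add_right_eq mod_Suc_eq ac_simps)
  finally show ?thesis by simp
qed

lemma S2: "(\<Sum>j<N. \<sigma> ((j+1) mod N) * \<sigma> ((j+f) mod N)) = autocorr N \<sigma> ((f+N-1) mod N)"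
proof -
  have "autocorr N \<sigma> ((f+N-1) mod N) = (\<Sum>j<N. (\<lambda>i. \<sigma> i * \<sigma> ((i+(f+N-1) mod N) mod N)) ((1+j) mod N))"
    unfolding autocorr_def by (rule sum_shift_mod[OF Npos, symmetric])
  also have "\<dots> = (\<Sum>j<N. \<sigma> ((j+1) mod N) * \<sigma> ((j+f) mod N))"
  proof (rule sum.cong[OF refl])
    fix j
    have "((1+j) mod N + (f+N-1) mod N) mod N = (1+j + (f+N-1)) mod N" by (rule mod_add_eq)
    also have "1+j + (f+N-1) = (j+f) + N" using N1 by simp
    also have "((j+f) + N) mod N = (j+f) mod N" by simp
    finally show "(\<lambda>i. \<sigma> i * \<sigma> ((i+(f+N-1) mod N) mod N)) ((1+j) mod N) = \<sigma> ((j+1) mod N) * \<sigma> ((j+f) mod N)"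
      by (simp add: ac_simps)
  qed
  finally show ?thesis by simp
qed

lemma S3: "(\<Sum>j<N. \<sigma> j * \<sigma> ((j+f+1) mod N)) = autocorr N \<sigma> ((f+1) mod N)"
  unfolding autocorr_def by (rule sum.cong[OF refl]) (simp add: mod_add_right_eq ac_simps)

lemma Tkey: "autocorr N \<sigma> ((f+N-1) mod N) - 2 * autocorr N \<sigma> f + autocorr N \<sigma> ((f+1) mod N) = -4 * TT N \<sigma> f"
proof -
  have "4 * TT N \<sigma> f = (\<Sum>j<N. (2 * uu N \<sigma> j) * (2 * uu N \<sigma> ((j+f) mod N)))"
    unfolding TT_def sum_distrib_left by (rule sum.cong[OF refl]) simp
  also have "\<dots> = (\<Sum>j<N. (\<sigma> ((j+1) mod N) - \<sigma> (j mod N)) * (\<sigma> (((j+f) mod N + 1) mod N) - \<sigma> ((j+f) mod N mod N)))"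
    by (simp only: e_eq)
  also have "\<dots> = (\<Sum>j<N. \<sigma> ((j+1) mod N) * \<sigma> ((j+f+1) mod N) - \<sigma> ((j+1) mod N) * \<sigma> ((j+f) mod N)
       - \<sigma> j * \<sigma> ((j+f+1) mod N) + \<sigma> j * \<sigma> ((j+f) mod N))"
    by (rule sum.cong[OF refl]) (simp add: mod_add_left_eq mod_Suc_eq algebra_simps)
  also have "\<dots> = autocorr N \<sigma> f - autocorr N \<sigma> ((f+N-1) mod N) - autocorr N \<sigma> ((f+1) mod N) + autocorr N \<sigma> f"
    by (simp only: sum.distrib sum_subtractf S1 S2 S3 autocorr_def[of N \<sigma> f, symmetric])
  finally show ?thesis by simp
qed

lemma dlap_T: "dlap N (autocorr N \<sigma>) f = - of_int (TT N \<sigma> f)"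
proof -
  have "real_of_int (autocorr N \<sigma> ((f+N-1) mod N) - 2 * autocorr N \<sigma> f + autocorr N \<sigma> ((f+1) mod N)) = real_of_int (-4 * TT N \<sigma> f)"
    by (simp only: Tkey)
  then show ?thesis unfolding dlap_def by simp
qed

lemma T0: "TT N \<sigma> 0 = int (num_changes N \<sigma>)"
proof -
  have "TT N \<sigma> 0 = (\<Sum>j<N. \<bar>uu N \<sigma> j\<bar>)"
    unfolding TT_def by (rule sum.cong[OF refl]) (simp add: u_sq)
  then show ?thesis using sum_abs_u by simp
qed

lemma sumT: "(\<Sum>f<N. TT N \<sigma> f) = 0"
proof -
  have "(\<Sum>f<N. TT N \<sigma> f) = (\<Sum>j<N. uu N \<sigma> j * (\<Sum>f<N. uu N \<sigma> ((j+f) mod N)))"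
    unfolding TT_def sum_distrib_left by (rule sum.swap)
  also have "\<dots> = (\<Sum>j<N. uu N \<sigma> j * (\<Sum>f<N. uu N \<sigma> f))"
    by (simp add: sum_shift_mod[OF Npos, of "uu N \<sigma>"])
  finally show ?thesis using sum_u by simp
qed

lemma absT: "(\<Sum>f<N. \<bar>TT N \<sigma> f\<bar>) \<le> (int (num_changes N \<sigma>))^2"
proof -
  have "(\<Sum>f<N. \<bar>TT N \<sigma> f\<bar>) \<le> (\<Sum>f<N. (\<Sum>j<N. \<bar>uu N \<sigma> j\<bar> * \<bar>uu N \<sigma> ((j+f) mod N)\<bar>))"
    unfolding TT_def by (rule sum_mono) (metis (no_types, lifting) abs_mult sum.cong sum_abs)
  also have "\<dots> = (\<Sum>j<N. \<bar>uu N \<sigma> j\<bar> * (\<Sum>f<N. \<bar>uu N \<sigma> ((j+f) mod N)\<bar>))"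
    unfolding sum_distrib_left by (rule sum.swap)
  also have "\<dots> = (\<Sum>j<N. \<bar>uu N \<sigma> j\<bar> * (\<Sum>f<N. \<bar>uu N \<sigma> f\<bar>))"
    using sum_shift_mod[OF Npos, of "\<lambda>i. \<bar>uu N \<sigma> i\<bar>"] by simp
  also have "\<dots> = (int (num_changes N \<sigma>))^2"
    unfolding sum_distrib_right[symmetric] sum_abs_u by (simp add: power2_eq_square)
  finally show ?thesis .
qed

lemma symT: assumes "f \<le> N" shows "TT N \<sigma> (N - f) = TT N \<sigma> f"
proof -
  have "TT N \<sigma> (N - f) = (\<Sum>j<N. (\<lambda>i. uu N \<sigma> i * uu N \<sigma> ((i + (N - f)) mod N)) ((f + j) mod N))"
    unfolding TT_def by (rule sum_shift_mod[OF Npos, symmetric])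
  also have "\<dots> = (\<Sum>j<N. uu N \<sigma> ((j+f) mod N) * uu N \<sigma> j)"
  proof (rule sum.cong[OF refl])
    fix j assume j: "j \<in> {..<N}"
    have "((f + j) mod N + (N - f)) mod N = (f + j + (N - f)) mod N" by (rule mod_add_left_eq)
    also have "f + j + (N - f) = j + N" using assms by simp
    also have "(j + N) mod N = j" using j by simp
    finally show "(\<lambda>i. uu N \<sigma> i * uu N \<sigma> ((i + (N - f)) mod N)) ((f + j) mod N) = uu N \<sigma> ((j+f) mod N) * uu N \<sigma> j"
      by (simp add: ac_simps)
  qed
  also have "\<dots> = TT N \<sigma> f" unfolding TT_def by (simp add: ac_simps)
  finally show ?thesis .
qed

lemma halfT: assumes "N = 2 * h" shows "even (TT N \<sigma> h)"
proof -
  have "TT N \<sigma> h = (\<Sum>j\<in>{0..<h}. uu N \<sigma> j * uu N \<sigma> ((j+h) mod N)) + (\<Sum>j\<in>{h..<h+h}. uu N \<sigma> j * uu N \<sigma> ((j+h) mod N))"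
  proof -
    have a: "TT N \<sigma> h = (\<Sum>j\<in>{0..<h+h}. uu N \<sigma> j * uu N \<sigma> ((j+h) mod N))"
      unfolding TT_def assms by (simp only: mult_2 lessThan_atLeast0)
    show ?thesis unfolding a by (rule sum.atLeastLessThan_concat[symmetric]) simp_all
  qed
  also have "(\<Sum>j\<in>{h..<h+h}. uu N \<sigma> j * uu N \<sigma> ((j+h) mod N)) = (\<Sum>j\<in>{0..<h}. uu N \<sigma> (j+h) * uu N \<sigma> ((j+h+h) mod N))"
    using sum.shift_bounds_nat_ivl[of "\<lambda>j. uu N \<sigma> j * uu N \<sigma> ((j+h) mod N)" 0 h h] by simp
  also have "\<dots> = (\<Sum>j\<in>{0..<h}. uu N \<sigma> j * uu N \<sigma> ((j+h) mod N))"
  proof (rule sum.cong[OF refl])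
    fix j assume "j \<in> {0..<h}"
    then have jh: "j < h" by simp
    have e: "j+h+h = j + N" using assms by simp
    have "(j+h+h) mod N = (j + N) mod N" by (simp only: e)
    also have "\<dots> = j mod N" by (rule mod_add_self2)
    also have "\<dots> = j" using jh assms by simp
    finally have "(j+h+h) mod N = j" .
    moreover have "(j+h) mod N = j + h" using jh assms by simp
    ultimately show "uu N \<sigma> (j+h) * uu N \<sigma> ((j+h+h) mod N) = uu N \<sigma> j * uu N \<sigma> ((j+h) mod N)"
      by simp
  qed
  finally show ?thesis by simp
qed

end

theorem mainTheorem10:
  fixes N k :: nat and \<sigma> :: "nat \<Rightarrow> int"
  assumes "N \<ge> 1"
    and "config N \<sigma>"
    and "num_changes N \<sigma> = 2 * k"
  shows "4 * real k \<le> norm1 N (dlap N (autocorr N \<sigma>))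
       \<and> norm1 N (dlap N (autocorr N \<sigma>)) \<le> 4 * (real k)^2
       \<and> (\<exists>m::int. norm1 N (dlap N (autocorr N \<sigma>)) = 4 * real_of_int m)"
proof -
  note N1 = assms(1) and cf = assms(2) and nc = assms(3)
  define T where "T = TT N \<sigma>"
  define S where "S = (\<Sum>f<N. \<bar>T f\<bar>)"
  have Npos: "0 < N" using N1 by simp
  have normS: "norm1 N (dlap N (autocorr N \<sigma>)) = real_of_int S"
    unfolding norm1_def S_def T_def using dlap_T[OF N1 cf] by simp
  have T0: "T 0 = 2 * int k" unfolding T_def using T0[OF N1 cf] nc by simp
  have sumT: "(\<Sum>f<N. T f) = 0" unfolding T_def using sumT[OF N1 cf] .
  have spl: "\<And>g :: nat \<Rightarrow> int. (\<Sum>f<N. g f) = g 0 + (\<Sum>f\<in>{1..<N}. g f)"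
    using Npos by (simp add: lessThan_atLeast0 sum.atLeast_Suc_lessThan)
  have low: "4 * int k \<le> S"
  proof -
    have a: "(\<Sum>f\<in>{1..<N}. T f) = - 2 * int k" using sumT spl[of T] T0 by simp
    have b: "\<bar>\<Sum>f\<in>{1..<N}. T f\<bar> \<le> (\<Sum>f\<in>{1..<N}. \<bar>T f\<bar>)" by (rule sum_abs)
    have c: "\<bar>\<Sum>f\<in>{1..<N}. T f\<bar> = 2 * int k" using a by simp
    have "2 * int k \<le> (\<Sum>f\<in>{1..<N}. \<bar>T f\<bar>)" using b c by linarith
    then show ?thesis unfolding S_def using spl[of "\<lambda>f. \<bar>T f\<bar>"] T0 by simp
  qed
  have up: "S \<le> 4 * (int k)^2"
    using absT[OF N1 cf] nc unfolding S_def T_def by (simp add: power_mult_distrib)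
  define nx where "nx = (\<lambda>x::int. max 0 (- x))"
  have absx: "\<And>x. \<bar>x\<bar> = x + 2 * nx x" unfolding nx_def by auto
  have S2: "S = 2 * (\<Sum>f<N. nx (T f))"
    unfolding S_def absx sum.distrib sumT by (simp add: sum_distrib_left)
  have ev: "even (\<Sum>f\<in>{1..<N}. nx (T f))"
  proof (rule even_sym_sum)
    fix f assume "0 < f" "f < N"
    then show "nx (T (N - f)) = nx (T f)" unfolding T_def using symT[OF N1 cf, of f] by simp
  next
    fix h assume "N = 2 * h"
    then have "even (T h)" unfolding T_def using halfT[OF N1 cf] by simp
    then show "even (nx (T h))" unfolding nx_def by (simp add: max_def)
  qed
  have "(\<Sum>f<N. nx (T f)) = nx (T 0) + (\<Sum>f\<in>{1..<N}. nx (T f))" by (rule spl)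
  also have "nx (T 0) = 0" unfolding nx_def T0 by simp
  finally have "even (\<Sum>f<N. nx (T f))" using ev by simp
  then obtain m where m: "(\<Sum>f<N. nx (T f)) = 2 * m" by blast
  have "S = 4 * m" using S2 m by simp
  then have mm: "norm1 N (dlap N (autocorr N \<sigma>)) = 4 * real_of_int m" using normS by simp
  have l: "4 * real k \<le> norm1 N (dlap N (autocorr N \<sigma>))"
  proof -
    have "real_of_int (4 * int k) \<le> real_of_int S" using low by (simp only: of_int_le_iff)
    then show ?thesis using normS by simp
  qed
  have u: "norm1 N (dlap N (autocorr N \<sigma>)) \<le> 4 * (real k)^2"
  proof -
    have "real_of_int S \<le> real_of_int (4 * (int k)^2)" using up by (simp only: of_int_le_iff)
    then show ?thesis using normS by simp
  qed
  show ?thesis using l u mm by blast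
qed

end
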